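(* Let $X$ be a complex vector space with $\dim_{\mathbb{C}}X\ge2$, $\Omega\subset X$ a polygonally connected $2$-open set, and $f\in\mathcal{H}_G(\Omega)$. If $|f|$ has a $\tau_{(1)}$-local minimum at $c\in\Omega$ and $f(c)\neq0$, then $f$ is constant.
   Context: $\Gamma_{1,d}(X)$: complex affine subspaces of $X$ of dimension $1,\dots,d$, with Euclidean topology. $A\subset X$ is $d$-open if $A\cap L$ is open in $L$ for all $L\in\Gamma_{1,d}(X)$. $\tau_{(1)}$: topology whose open sets are the $1$-open sets. Polygonally connected: any two points joined by a polygonal chain in the set. $\mathcal{H}_G(\Omega)$: maps $f:\Omega\to\mathbb{C}$ such that for all $a\in\Omega$, $v\in X$, $\lambda\mapsto f(a+\lambda v)$ is holomorphic on some disc around $0$. *)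

theory Defs
  imports "HOL-Analysis.Analysis"
begin

text \<open>X is modelled as a type 'a with a complex scalar multiplication sc
 satisfying the vector_space axioms. Complex affine lines and planes are
 parametrised by complex affine coordinates; their Euclidean topology is the one
 transported from the complex plane, resp. complex 2-space.\<close>

definition line_open :: "(complex \<Rightarrow> 'a \<Rightarrow> 'a::ab_group_add) \<Rightarrow> 'a set \<Rightarrow> bool" where
  "line_open sc A \<longleftrightarrow>
     (\<forall>a v. v \<noteq> 0 \<longrightarrow> open {z::complex. a + sc z v \<in> A})"

definition plane_open :: "(complex \<Rightarrow> 'a \<Rightarrow> 'a::ab_group_add) \<Rightarrow> 'a set \<Rightarrow> bool" where
  "plane_open sc A \<longleftrightarrow>
     (\<forall>a u v. u \<noteq> v \<and> \<not> module.dependent sc {u, v} \<longrightarrow>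
        open {p::complex \<times> complex. a + sc (fst p) u + sc (snd p) v \<in> A})"

definition one_open :: "(complex \<Rightarrow> 'a \<Rightarrow> 'a::ab_group_add) \<Rightarrow> 'a set \<Rightarrow> bool" where
  "one_open sc A \<longleftrightarrow> line_open sc A"

definition two_open :: "(complex \<Rightarrow> 'a \<Rightarrow> 'a::ab_group_add) \<Rightarrow> 'a set \<Rightarrow> bool" where
  "two_open sc A \<longleftrightarrow> line_open sc A \<and> plane_open sc A"

definition cseg :: "(complex \<Rightarrow> 'a \<Rightarrow> 'a::ab_group_add) \<Rightarrow> 'a \<Rightarrow> 'a \<Rightarrow> 'a set" where
  "cseg sc p q = {p + sc (complex_of_real t) (q - p) | t. 0 \<le> t \<and> t \<le> 1}"

definition polygonally_connected :: "(complex \<Rightarrow> 'a \<Rightarrow> 'a::ab_group_add) \<Rightarrow> 'a set \<Rightarrow> bool" where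
  "polygonally_connected sc S \<longleftrightarrow>
     (\<forall>x\<in>S. \<forall>y\<in>S. \<exists>ps::'a list. ps \<noteq> [] \<and> hd ps = x \<and> last ps = y \<and>
        (\<forall>i. Suc i < length ps \<longrightarrow> cseg sc (ps ! i) (ps ! Suc i) \<subseteq> S))"

definition G_holomorphic :: "(complex \<Rightarrow> 'a \<Rightarrow> 'a::ab_group_add) \<Rightarrow> 'a set \<Rightarrow> ('a \<Rightarrow> complex) \<Rightarrow> bool" where
  "G_holomorphic sc \<Omega> f \<longleftrightarrow>
     (\<forall>a\<in>\<Omega>. \<forall>v. \<exists>r>0. (\<lambda>z. f (a + sc z v)) holomorphic_on ball 0 r)"

definition tau1_local_min_abs :: "(complex \<Rightarrow> 'a \<Rightarrow> 'a::ab_group_add) \<Rightarrow> 'a set \<Rightarrow> ('a \<Rightarrow> complex) \<Rightarrow> 'a \<Rightarrow> bool" where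
  "tau1_local_min_abs sc \<Omega> f c \<longleftrightarrow>
     (\<exists>U. one_open sc U \<and> c \<in> U \<and> (\<forall>x\<in>U \<inter> \<Omega>. norm (f c) \<le> norm (f x)))"

end

theory Submission
  imports Defs "HOL-Complex_Analysis.Complex_Analysis"
begin

context
  fixes sc :: "complex \<Rightarrow> 'a::ab_group_add \<Rightarrow> 'a"
  assumes vs: "vector_space sc"
begin

lemma open_line:
  assumes "line_open sc \<Omega>"
  shows "open {z. a + sc z v \<in> \<Omega>}"
proof (cases "v = 0")
  case True
  interpret V: vector_space sc by (rule vs)
  show ?thesis using True by (cases "a \<in> \<Omega>") auto
next
  case False
  then show ?thesis using assms unfolding line_open_def by blast
qed

lemma hol_line:
  assumes "G_holomorphic sc \<Omega> f"
  shows "(\<lambda>z. f (p + sc z v)) holomorphic_on {z. p + sc z v \<in> \<Omega>}"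
  unfolding holomorphic_on_def
proof
  interpret V: vector_space sc by (rule vs)
  fix z0 assume "z0 \<in> {z. p + sc z v \<in> \<Omega>}"
  then obtain r where r: "r > 0" and g: "(\<lambda>z. f (p + sc z0 v + sc z v)) holomorphic_on ball 0 r"
    using assms unfolding G_holomorphic_def by blast
  have "(\<lambda>z. f (p + sc z0 v + sc (z - z0) v)) holomorphic_on ball z0 r"
  proof -
    have "(\<lambda>z. z - z0) holomorphic_on ball z0 r" by (intro holomorphic_intros)
    moreover have "(\<lambda>z. z - z0) ` ball z0 r \<subseteq> ball 0 r"
      by (auto simp: dist_norm norm_minus_commute)
    ultimately show ?thesis
      using holomorphic_on_compose_gen[OF _ g] by (simp add: o_def)
  qed
  then have d: "(\<lambda>z. f (p + sc z0 v + sc (z - z0) v)) field_differentiable at z0"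
    using holomorphic_on_imp_differentiable_at r by auto
  have eq: "\<And>z. f (p + sc z0 v + sc (z - z0) v) = f (p + sc z v)"
    by (simp add: V.scale_left_diff_distrib)
  show "(\<lambda>z. f (p + sc z v)) field_differentiable at z0 within {z. p + sc z v \<in> \<Omega>}"
    using d unfolding eq by (rule field_differentiable_at_within)
qed

lemma line_const:
  assumes lo: "line_open sc \<Omega>" and G: "G_holomorphic sc \<Omega> f"
    and p: "p \<in> \<Omega>" and r: "r > 0" and c: "\<forall>z. norm z < r \<longrightarrow> f (p + sc z v) = k"
    and zS: "z \<in> connected_component_set {z. p + sc z v \<in> \<Omega>} 0"
  shows "f (p + sc z v) = k"
proof -
  interpret V: vector_space sc by (rule vs)
  let ?A = "{z. p + sc z v \<in> \<Omega>}"
  let ?S = "connected_component_set ?A 0"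
  have oA: "open ?A" by (rule open_line[OF lo])
  have oS: "open ?S" by (rule open_connected_component[OF oA])
  have 0: "0 \<in> ?S" using p by simp
  obtain r' where r': "r' > 0" "ball 0 r' \<subseteq> ?S" using oS 0 open_contains_ball by blast
  show ?thesis
  proof (rule analytic_continuation_open[where s = "ball 0 (min r r')" and s' = ?S
        and g = "\<lambda>_. k" and f = "\<lambda>z. f (p + sc z v)"])
    show "(\<lambda>z. f (p + sc z v)) holomorphic_on ?S"
      by (rule holomorphic_on_subset[OF hol_line[OF G]]) (rule connected_component_subset)
  qed (use r r' zS c in \<open>auto simp: oS\<close>)
qed

lemma seg_in_comp:
  assumes "\<forall>t. 0 \<le> t \<and> t \<le> 1 \<longrightarrow> complex_of_real t \<in> A"
  shows "1 \<in> connected_component_set A 0"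
proof -
  have "closed_segment 0 (1::complex) \<subseteq> A"
    using assms by (auto simp: closed_segment_def scaleR_conv_of_real)
  moreover have "connected (closed_segment 0 (1::complex))" by simp
  ultimately have "closed_segment 0 1 \<subseteq> connected_component_set A 0"
    by (intro connected_component_maximal) auto
  then show ?thesis by auto
qed

definition good :: "('a \<Rightarrow> complex) \<Rightarrow> complex \<Rightarrow> 'a \<Rightarrow> bool" where
  "good f k p \<longleftrightarrow> (\<forall>v. \<exists>r>0. \<forall>z. norm z < r \<longrightarrow> f (p + sc z v) = k)"

lemma good_val: "good f k p \<Longrightarrow> f p = k"
proof -
  interpret V: vector_space sc by (rule vs)
  assume "good f k p"
  then obtain r where "r > 0" "\<forall>z. norm z < r \<longrightarrow> f (p + sc z 0) = k"
    unfolding good_def by blast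
  then show ?thesis by (metis V.scale_zero_right add.right_neutral norm_zero)
qed


lemma good_base:
  assumes lo: "line_open sc \<Omega>" and G: "G_holomorphic sc \<Omega> f" and c: "c \<in> \<Omega>"
    and U: "one_open sc U" "c \<in> U" "\<forall>x\<in>U \<inter> \<Omega>. norm (f c) \<le> norm (f x)"
    and nz: "f c \<noteq> 0"
  shows "good f (f c) c"
  unfolding good_def
proof
  interpret V: vector_space sc by (rule vs)
  fix v
  show "\<exists>r>0. \<forall>z. norm z < r \<longrightarrow> f (c + sc z v) = f c"
  proof (cases "v = 0")
    case True then show ?thesis by (intro exI[of _ 1]) auto
  next
    case False
    let ?A = "{z. c + sc z v \<in> \<Omega>}" and ?B = "{z. c + sc z v \<in> U}"
    have "open (?A \<inter> ?B)"
      using open_line[OF lo] U(1) False unfolding one_open_def line_open_def by blast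
    moreover have "0 \<in> ?A \<inter> ?B" using c U by simp
    ultimately obtain r where r: "r > 0" "ball 0 r \<subseteq> ?A \<inter> ?B" using open_contains_ball by blast
    define h where "h = (\<lambda>z. f (c + sc z v))"
    have h0: "h 0 = f c" by (simp add: h_def)
    have hol: "h holomorphic_on ball 0 r"
      unfolding h_def using hol_line[OF G] r(2) holomorphic_on_subset by blast
    have ge: "norm (f c) \<le> norm (h z)" if "z \<in> ball 0 r" for z
    proof -
      have "c + sc z v \<in> U \<inter> \<Omega>" using r(2) that by blast
      then show ?thesis using U(3) by (simp add: h_def)
    qed
    have hnz: "h z \<noteq> 0" if "z \<in> ball 0 r" for z
      using ge[OF that] nz by auto
    have "(\<lambda>z. inverse (h z)) holomorphic_on ball 0 r"
      using hol hnz by (intro holomorphic_intros) auto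
    then have "(\<lambda>z. inverse (h z)) constant_on ball 0 r"
    proof (rule maximum_modulus_principle[where U = "ball 0 r" and \<xi> = 0])
      show "\<And>z. z \<in> ball 0 r \<Longrightarrow> norm (inverse (h z)) \<le> norm (inverse (h 0))"
        using ge hnz nz h0 by (simp add: norm_inverse le_imp_inverse_le)
    qed (use r in auto)
    then obtain k where k: "\<And>z. z \<in> ball 0 r \<Longrightarrow> inverse (h z) = k"
      unfolding constant_on_def by blast
    have "h z = h 0" if "z \<in> ball 0 r" for z
      using k[OF that] k[of 0] r(1) by (metis centre_in_ball inverse_inverse_eq)
    then show ?thesis using r(1) h0 by (intro exI[of _ r]) (auto simp: h_def)
  qed
qed


lemma good_step:
  assumes lo: "line_open sc \<Omega>" and po: "plane_open sc \<Omega>" and G: "G_holomorphic sc \<Omega> f"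
    and gp: "good f k p" and seg: "cseg sc p q \<subseteq> \<Omega>"
  shows "good f k q"
proof -
  interpret V: vector_space sc by (rule vs)
  define u where "u = q - p"
  have qeq: "q = p + u" by (simp add: u_def)
  have segu: "p + sc (complex_of_real t) u \<in> \<Omega>" if "0 \<le> t" "t \<le> 1" for t
    using seg that unfolding cseg_def u_def by blast
  have pin: "p \<in> \<Omega>" using segu[of 0] by simp
  show ?thesis
  proof (cases "u = 0")
    case True then show ?thesis using gp qeq by simp
  next
    case unz: False
    show ?thesis unfolding good_def
    proof
      fix w
      show "\<exists>r>0. \<forall>t. norm t < r \<longrightarrow> f (q + sc t w) = k"
      proof (cases "\<exists>l. w = sc l u")
        case True
        then obtain l where l: "w = sc l u" by blast
        let ?S = "connected_component_set {z. p + sc z u \<in> \<Omega>} 0"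
        obtain r0 where r0: "r0 > 0" "\<forall>z. norm z < r0 \<longrightarrow> f (p + sc z u) = k"
          using gp unfolding good_def by blast
        have const: "\<And>z. z \<in> ?S \<Longrightarrow> f (p + sc z u) = k"
          using line_const[OF lo G pin r0(1) r0(2)] by blast
        have "1 \<in> ?S" by (rule seg_in_comp) (use segu in auto)
        moreover have "open ?S" by (rule open_connected_component[OF open_line[OF lo]])
        ultimately obtain d where d: "d > 0" "ball 1 d \<subseteq> ?S" using open_contains_ball by blast
        show ?thesis
        proof (intro exI[of _ "d / (norm l + 1)"] conjI allI impI)
          show "d / (norm l + 1) > 0" using d by (intro divide_pos_pos) (auto intro: add_nonneg_pos)
          fix t :: complex assume t: "norm t < d / (norm l + 1)"
          have "norm (t * l) \<le> norm t * (norm l + 1)"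
            by (simp add: norm_mult mult_left_mono)
          also have "\<dots> < d"
            proof -
              have "0 < norm l + 1" by (simp add: add_nonneg_pos)
              then show ?thesis using t by (simp add: pos_less_divide_eq)
            qed
          finally have "1 + t * l \<in> ball 1 d" by (simp add: dist_norm)
          then have "f (p + sc (1 + t * l) u) = k" using d const by blast
          moreover have "p + sc (1 + t * l) u = q + sc t w"
            by (simp add: qeq l V.scale_left_distrib add.assoc)
          ultimately show "f (q + sc t w) = k" by simp
        qed
      next
        case False
        have "w \<noteq> u" using False by (metis V.scale_one)
        have "\<not> V.dependent {w, u}"
          using False unz \<open>w \<noteq> u\<close> by (auto simp: V.independent_insert V.span_singleton)
        then have ind: "\<not> V.dependent {u, w}" by (simp add: insert_commute)
        let ?D = "{P::complex\<times>complex. p + sc (fst P) u + sc (snd P) w \<in> \<Omega>}"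
        have oD: "open ?D"
          using po[unfolded plane_open_def, rule_format, of u w p] ind \<open>w \<noteq> u\<close> by blast
        let ?K = "(\<lambda>s. (complex_of_real s, 0::complex)) ` {0..1}"
        have cK: "compact ?K" by (intro compact_continuous_image continuous_intros) auto
        have KD: "?K \<subseteq> ?D" using segu by auto
        obtain e where e: "e > 0" "(\<Union>x\<in>?K. ball x e) \<subseteq> ?D"
          using compact_subset_open_imp_ball_epsilon_subset[OF cK oD KD] by blast
        show ?thesis
        proof (intro exI[of _ e] conjI allI impI)
          show "e > 0" by fact
          fix t :: complex assume t: "norm t < e"
          define v where "v = u + sc t w"
          obtain r0 where r0: "r0 > 0" "\<forall>z. norm z < r0 \<longrightarrow> f (p + sc z v) = k"
            using gp unfolding good_def by blast
          have "1 \<in> connected_component_set {z. p + sc z v \<in> \<Omega>} 0"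
          proof (rule seg_in_comp, intro allI impI)
            fix s :: real assume s: "0 \<le> s \<and> s \<le> 1"
            have "(complex_of_real s, complex_of_real s * t) \<in> ball (complex_of_real s, 0) e"
            proof -
              have "norm (complex_of_real s * t) \<le> norm t"
                using s by (simp add: norm_mult mult_left_le_one_le)
              then show ?thesis using t by (simp add: dist_Pair_Pair dist_norm)
            qed
            moreover have "(complex_of_real s, 0) \<in> ?K" using s by auto
            ultimately have "(complex_of_real s, complex_of_real s * t) \<in> (\<Union>x\<in>?K. ball x e)"
              by (intro UN_I)
            then have "(complex_of_real s, complex_of_real s * t) \<in> ?D" using e(2) by (rule subsetD[rotated])
            then show "complex_of_real s \<in> {z. p + sc z v \<in> \<Omega>}"
              by (simp add: v_def V.scale_right_distrib add.assoc)
          qed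
          then have "f (p + sc 1 v) = k" using line_const[OF lo G pin r0(1) r0(2)] by blast
          then show "f (q + sc t w) = k" by (simp add: v_def qeq add.assoc)
        qed
      qed
    qed
  qed
qed

end

theorem mainTheorem7:
  fixes sc :: "complex \<Rightarrow> 'a::ab_group_add \<Rightarrow> 'a"
    and \<Omega> :: "'a set" and f :: "'a \<Rightarrow> complex" and c :: 'a
  assumes "vector_space sc"
    and "\<exists>u v. u \<noteq> v \<and> \<not> module.dependent sc {u, v}"
    and "two_open sc \<Omega>"
    and "polygonally_connected sc \<Omega>"
    and "G_holomorphic sc \<Omega> f"
    and "c \<in> \<Omega>"
    and "tau1_local_min_abs sc \<Omega> f c"
    and "f c \<noteq> 0"
  shows "\<exists>k. \<forall>x\<in>\<Omega>. f x = k"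
proof (intro exI ballI)
  note vs = assms(1)
  have lo: "line_open sc \<Omega>" and po: "plane_open sc \<Omega>" using assms(3) by (auto simp: two_open_def)
  obtain U where U: "one_open sc U" "c \<in> U" "\<forall>x\<in>U \<inter> \<Omega>. norm (f c) \<le> norm (f x)"
    using assms(7) unfolding tau1_local_min_abs_def by blast
  have base: "good sc f (f c) c"
    by (rule good_base[OF vs lo assms(5) assms(6) U assms(8)])
  fix x assume x: "x \<in> \<Omega>"
  obtain ps where ps: "ps \<noteq> []" "hd ps = c" "last ps = x"
    "\<forall>i. Suc i < length ps \<longrightarrow> cseg sc (ps ! i) (ps ! Suc i) \<subseteq> \<Omega>"
    using assms(4) assms(6) x unfolding polygonally_connected_def by blast
  have "i < length ps \<Longrightarrow> good sc f (f c) (ps ! i)" for i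
  proof (induction i)
    case 0 then show ?case using base ps(1,2) by (simp add: hd_conv_nth)
  next
    case (Suc i)
    then show ?case using good_step[OF vs lo po assms(5)] ps(4) by auto
  qed
  then have "good sc f (f c) (ps ! (length ps - 1))" using ps(1) by simp
  then have "good sc f (f c) x" using ps(1,3) by (simp add: last_conv_nth)
  then show "f x = f c" by (rule good_val[OF vs])
qed

end
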